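(* Let $G$ be a $\Delta$-regular multigraph of even order, and let $S \subsetneq V(G)$ with $|S|$ odd and $|S| \ge 3$ be such that $\langle S\rangle$ is $\Delta$-full or $\Delta$-overfull, and such that $\operatorname{ex}(\langle S\rangle, \Delta)$ is maximum among all induced odd-order subgraphs of $G$ of order at least 3 that are $\Delta$-full or $\Delta$-overfull. Then $\Delta(G_S) \le \Delta$ and $\Gamma(G_S) \le \Gamma(G)$, and similarly $\Delta(G_{S^c}) \le \Delta$ and $\Gamma(G_{S^c}) \le \Gamma(G)$, where $S^c = V(G)\setminus S$.
   Context: Multigraphs are finite and loopless, multiple edges allowed. For $S \subseteq V(G)$, $\langle S\rangle$ is the induced subgraph and $\partial(S)$ the set of edges with exactly one end in $S$. For a multigraph $H$ of odd order $n(H)\ge 3$ with $e(H)$ edges, $t(H) = 2e(H)/(n(H)-1)$; $H$ is $k$-full if $t(H)=k$ and $k$-overfull if $t(H)>k$. The $k$-excess is $\operatorname{ex}(H,k) = e(H) - k(n(H)-1)/2$. $\Gamma(G) = \max\{t(\langle R\rangle) : R\subseteq V(G), |R| \text{ odd}, |R|\ge 3\}$ (statements about $\Gamma$ of a multigraph with no such $R$ are vacuous). Shrinking: for a nonempty proper subset $S$ of $V(G)$, $G_S$ has vertex set $(V(G)\setminus S)\cup\{s\}$ for a new vertex $s$; its edges are the edges of $G - S$ together with, for each $u \notin S$, exactly as many edges $us$ as there are edges of $G$ joining $u$ to vertices of $S$. *)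

theory Defs
  imports Complex_Main
begin

text \<open>A (finite, loopless) multigraph is given by a vertex set V and an edge
multiplicity function m: m u v is the number of edges joining u and v.\<close>

definition multigraph :: "'a set \<Rightarrow> ('a \<Rightarrow> 'a \<Rightarrow> nat) \<Rightarrow> bool" where
  "multigraph V m \<longleftrightarrow> finite V \<and> (\<forall>u v. m u v = m v u) \<and> (\<forall>v. m v v = 0)
     \<and> (\<forall>u v. m u v \<noteq> 0 \<longrightarrow> u \<in> V \<and> v \<in> V)"

definition deg :: "'a set \<Rightarrow> ('a \<Rightarrow> 'a \<Rightarrow> nat) \<Rightarrow> 'a \<Rightarrow> nat" where
  "deg V m v = (\<Sum>u\<in>V. m v u)"

definition regular :: "'a set \<Rightarrow> ('a \<Rightarrow> 'a \<Rightarrow> nat) \<Rightarrow> nat \<Rightarrow> bool" where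
  "regular V m k \<longleftrightarrow> (\<forall>v\<in>V. deg V m v = k)"

definition max_deg :: "'a set \<Rightarrow> ('a \<Rightarrow> 'a \<Rightarrow> nat) \<Rightarrow> nat" where
  "max_deg V m = Max (deg V m ` V)"

definition e_ind :: "('a \<Rightarrow> 'a \<Rightarrow> nat) \<Rightarrow> 'a set \<Rightarrow> nat" where
  "e_ind m R = (\<Sum>u\<in>R. \<Sum>v\<in>R. m u v) div 2"

definition t_ind :: "('a \<Rightarrow> 'a \<Rightarrow> nat) \<Rightarrow> 'a set \<Rightarrow> real" where
  "t_ind m R = 2 * real (e_ind m R) / (real (card R) - 1)"

definition ex_ind :: "('a \<Rightarrow> 'a \<Rightarrow> nat) \<Rightarrow> 'a set \<Rightarrow> nat \<Rightarrow> real" where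
  "ex_ind m R k = real (e_ind m R) - real k * (real (card R) - 1) / 2"

definition odd_sets :: "'a set \<Rightarrow> 'a set set" where
  "odd_sets V = {R. R \<subseteq> V \<and> odd (card R) \<and> card R \<ge> 3}"

definition Gamma_set :: "'a set \<Rightarrow> ('a \<Rightarrow> 'a \<Rightarrow> nat) \<Rightarrow> real set" where
  "Gamma_set V m = t_ind m ` odd_sets V"

definition Gamma :: "'a set \<Rightarrow> ('a \<Rightarrow> 'a \<Rightarrow> nat) \<Rightarrow> real" where
  "Gamma V m = Max (Gamma_set V m)"

text \<open>Shrinking S to a new vertex: vertices of G_S are Some u (u \<notin> S) and the
new vertex None.\<close>
definition shrink_V :: "'a set \<Rightarrow> 'a set \<Rightarrow> 'a option set" where
  "shrink_V V S = Some ` (V - S) \<union> {None}"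

definition shrink_m :: "'a set \<Rightarrow> ('a \<Rightarrow> 'a \<Rightarrow> nat) \<Rightarrow> 'a set \<Rightarrow> 'a option \<Rightarrow> 'a option \<Rightarrow> nat" where
  "shrink_m V m S x y =
     (if x \<in> shrink_V V S \<and> y \<in> shrink_V V S then
        (case (x, y) of
           (Some u, Some v) \<Rightarrow> m u v
         | (Some u, None) \<Rightarrow> (\<Sum>w\<in>S. m u w)
         | (None, Some v) \<Rightarrow> (\<Sum>w\<in>S. m w v)
         | (None, None) \<Rightarrow> 0)
      else 0)"

end

theory Submission
  imports Defs
begin

definition PP :: "('a \<Rightarrow> 'a \<Rightarrow> nat) \<Rightarrow> 'a set \<Rightarrow> 'a set \<Rightarrow> nat" where
  "PP m A B = (\<Sum>u\<in>A. \<Sum>v\<in>B. m u v)"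

lemma PP_sym: assumes "\<forall>u v. m u v = m v u" shows "PP m A B = PP m B A"
  unfolding PP_def using assms by (subst sum.swap) simp

lemma PP_un_left: "finite A \<Longrightarrow> finite B \<Longrightarrow> A \<inter> B = {} \<Longrightarrow> PP m (A \<union> B) C = PP m A C + PP m B C"
  unfolding PP_def by (rule sum.union_disjoint)

lemma PP_un_right: "finite B \<Longrightarrow> finite C \<Longrightarrow> B \<inter> C = {} \<Longrightarrow> PP m A (B \<union> C) = PP m A B + PP m A C"
  unfolding PP_def by (simp add: sum.union_disjoint sum.distrib)

lemma PP_even: assumes "\<forall>u v. m u v = m v u" "\<forall>v. m v v = 0" "finite R" shows "even (PP m R R)"
  using assms(3)
proof (induction R rule: finite_induct)
  case empty then show ?case by (simp add: PP_def)
next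
  case (insert a F)
  have s: "(\<Sum>u\<in>F. m u a) = (\<Sum>v\<in>F. m a v)" using assms(1) by simp
  have "PP m (insert a F) (insert a F) = 2 * (\<Sum>v\<in>F. m a v) + PP m F F"
    using insert(1,2) assms(2) s by (simp add: PP_def sum.distrib)
  then show ?case using insert(3) by simp
qed

lemma PP_V: assumes "regular V m k" "A \<subseteq> V" shows "PP m A V = k * card A"
proof -
  have "PP m A V = (\<Sum>u\<in>A. deg V m u)" by (simp add: PP_def deg_def)
  also have "\<dots> = (\<Sum>u\<in>A. k)" using assms by (intro sum.cong) (auto simp: regular_def)
  finally show ?thesis by simp
qed

lemma e_ind_real: assumes "multigraph V m" "finite R"
  shows "real (e_ind m R) = real (PP m R R) / 2"
proof -
  have "even (PP m R R)" using assms by (intro PP_even) (auto simp: multigraph_def)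
  then obtain k where "PP m R R = 2 * k" by blast
  then show ?thesis by (simp add: e_ind_def PP_def[symmetric])
qed

lemma t_ind_real: assumes "multigraph V m" "finite R"
  shows "t_ind m R = real (PP m R R) / (real (card R) - 1)"
  using e_ind_real[OF assms] by (simp add: t_ind_def)

lemma ex_ind_real: assumes "multigraph V m" "finite R"
  shows "ex_ind m R k = real (PP m R R) / 2 - real k * (real (card R) - 1) / 2"
  using e_ind_real[OF assms] by (simp add: ex_ind_def)

lemma SV_eq: "shrink_V V T = insert None (Some ` (V - T))"
  by (simp add: shrink_V_def)

lemma sm_SS: "u \<in> V - T \<Longrightarrow> v \<in> V - T \<Longrightarrow> shrink_m V m T (Some u) (Some v) = m u v"
  by (simp add: shrink_m_def shrink_V_def)
lemma sm_SN: "u \<in> V - T \<Longrightarrow> shrink_m V m T (Some u) None = (\<Sum>w\<in>T. m u w)"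
  by (simp add: shrink_m_def shrink_V_def)
lemma sm_NS: "v \<in> V - T \<Longrightarrow> shrink_m V m T None (Some v) = (\<Sum>w\<in>T. m w v)"
  by (simp add: shrink_m_def shrink_V_def)
lemma sm_NN: "shrink_m V m T None None = 0"
  by (simp add: shrink_m_def shrink_V_def)

lemma PP_shrink_some: assumes "R' \<subseteq> V - T"
  shows "PP (shrink_m V m T) (Some ` R') (Some ` R') = PP m R' R'"
proof -
  have "PP (shrink_m V m T) (Some ` R') (Some ` R') = (\<Sum>u\<in>R'. \<Sum>v\<in>R'. shrink_m V m T (Some u) (Some v))"
    by (simp add: PP_def sum.reindex)
  also have "\<dots> = PP m R' R'" unfolding PP_def
  proof (intro sum.cong refl)
    fix u v assume "u \<in> R'" "v \<in> R'"
    then show "shrink_m V m T (Some u) (Some v) = m u v" using assms by (intro sm_SS) auto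
  qed
  finally show ?thesis .
qed

lemma PP_shrink_none: assumes "R' \<subseteq> V - T" "\<forall>u v. m u v = m v u" "finite R'"
  shows "PP (shrink_m V m T) (insert None (Some ` R')) (insert None (Some ` R')) = PP m R' R' + 2 * PP m R' T"
proof -
  let ?s = "shrink_m V m T"
  have "PP ?s (insert None (Some ` R')) (insert None (Some ` R')) =
     (\<Sum>v\<in>R'. ?s None (Some v)) + (\<Sum>u\<in>R'. ?s (Some u) None + (\<Sum>v\<in>R'. ?s (Some u) (Some v)))"
    using assms(3) by (simp add: PP_def sum.reindex sm_NN sum.distrib)
  also have "\<dots> = (\<Sum>v\<in>R'. \<Sum>w\<in>T. m w v) + (\<Sum>u\<in>R'. (\<Sum>w\<in>T. m u w) + (\<Sum>v\<in>R'. m u v))"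
  proof (intro arg_cong2[where f="(+)"] sum.cong refl)
    fix u assume u: "u \<in> R'"
    then show "?s None (Some u) = (\<Sum>w\<in>T. m w u)" "?s (Some u) None = (\<Sum>w\<in>T. m u w)"
      using assms(1) by (auto intro!: sm_NS sm_SN)
    fix v assume "v \<in> R'"
    then show "?s (Some u) (Some v) = m u v" using u assms(1) by (intro sm_SS) auto
  qed
  also have "(\<Sum>v\<in>R'. \<Sum>w\<in>T. m w v) = PP m R' T" unfolding PP_def using assms(2) by simp
  finally show ?thesis by (simp add: sum.distrib PP_def)
qed

lemma deg_shrink_some: assumes "T \<subseteq> V" "finite V" "u \<in> V - T"
  shows "deg (shrink_V V T) (shrink_m V m T) (Some u) = deg V m u"
proof -
  have "deg (shrink_V V T) (shrink_m V m T) (Some u) = (\<Sum>w\<in>T. m u w) + (\<Sum>v\<in>V - T. m u v)"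
    unfolding deg_def SV_eq using assms
    by (simp add: sum.reindex sm_SN) (intro sum.cong refl, auto simp: sm_SS)
  also have "\<dots> = deg V m u" unfolding deg_def using assms
    by (simp add: sum.subset_diff[of T V])
  finally show ?thesis .
qed

lemma deg_shrink_none: assumes "T \<subseteq> V" "finite V" "\<forall>u v. m u v = m v u"
  shows "deg (shrink_V V T) (shrink_m V m T) None = PP m T (V - T)"
proof -
  have "deg (shrink_V V T) (shrink_m V m T) None = (\<Sum>v\<in>V - T. \<Sum>w\<in>T. m w v)"
    unfolding deg_def SV_eq using assms
    by (simp add: sum.reindex sm_NN) (intro sum.cong refl, auto simp: sm_NS)
  also have "\<dots> = PP m T (V - T)" unfolding PP_def by (rule sum.swap)
  finally show ?thesis .
qed

lemma maxdeg_shrink: assumes "multigraph V m" "regular V m k" "T \<subseteq> V" "PP m T (V - T) \<le> k"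
  shows "max_deg (shrink_V V T) (shrink_m V m T) \<le> k"
proof -
  have fin: "finite V" "\<forall>u v. m u v = m v u" using assms(1) by (auto simp: multigraph_def)
  have "finite (shrink_V V T)" using fin by (simp add: SV_eq)
  moreover have "shrink_V V T \<noteq> {}" by (simp add: SV_eq)
  moreover have "\<forall>x\<in>shrink_V V T. deg (shrink_V V T) (shrink_m V m T) x \<le> k"
  proof
    fix x assume x: "x \<in> shrink_V V T"
    show "deg (shrink_V V T) (shrink_m V m T) x \<le> k"
    proof (cases x)
      case None then show ?thesis using deg_shrink_none[OF assms(3) fin] assms(4) by simp
    next
      case (Some u)
      then have "u \<in> V - T" using x by (auto simp: SV_eq)
      then show ?thesis using Some deg_shrink_some[OF assms(3) fin(1)] assms(2) by (simp add: regular_def)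
    qed
  qed
  ultimately show ?thesis unfolding max_deg_def by (simp add: Max_le_iff)
qed


lemma gamma_cases:
  assumes mg: "multigraph V m" and T: "T \<subseteq> V" and R: "R \<in> odd_sets (shrink_V V T)"
  shows "(\<exists>R'. R' \<in> odd_sets V \<and> t_ind (shrink_m V m T) R = t_ind m R')
       \<or> (\<exists>R'. R' \<subseteq> V - T \<and> even (card R') \<and> card R' \<ge> 2 \<and>
            t_ind (shrink_m V m T) R = real (PP m R' R' + 2 * PP m R' T) / real (card R'))"
proof -
  have fin: "finite V" and sym: "\<forall>u v. m u v = m v u" using mg by (auto simp: multigraph_def)
  define R' where "R' = {u. Some u \<in> R}"
  have Rsub: "R \<subseteq> shrink_V V T" and Rodd: "odd (card R)" and R3: "card R \<ge> 3"
    using R by (auto simp: odd_sets_def)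
  have R'sub: "R' \<subseteq> V - T" using Rsub by (auto simp: R'_def SV_eq)
  have finR': "finite R'" using R'sub fin finite_subset by blast
  have Rdec: "R - {None} = Some ` R'" 
  proof (rule set_eqI)
    fix x show "x \<in> R - {None} \<longleftrightarrow> x \<in> Some ` R'" by (cases x) (auto simp: R'_def)
  qed
  show ?thesis
  proof (cases "None \<in> R")
    case True
    then have Req: "R = insert None (Some ` R')" using Rdec by blast
    have cR: "card R = card R' + 1" using finR' by (simp add: Req card_image)
    have ev: "even (PP m R' R')" using PP_even sym mg finR' by (auto simp: multigraph_def)
    have "e_ind (shrink_m V m T) R = (PP m R' R' + 2 * PP m R' T) div 2"
      unfolding e_ind_def PP_def[symmetric] Req using PP_shrink_none[OF R'sub sym finR'] by simp
    then have "real (e_ind (shrink_m V m T) R) = real (PP m R' R' + 2 * PP m R' T) / 2"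
      using ev by (auto elim!: evenE)
    then have "t_ind (shrink_m V m T) R = real (PP m R' R' + 2 * PP m R' T) / real (card R')"
      unfolding t_ind_def cR by simp
    moreover have "even (card R')" "card R' \<ge> 2" using cR Rodd R3 by auto
    ultimately show ?thesis using R'sub by blast
  next
    case False
    then have Req: "R = Some ` R'" using Rdec by blast
    have cR: "card R = card R'" by (simp add: Req card_image)
    have "e_ind (shrink_m V m T) R = e_ind m R'"
      unfolding e_ind_def PP_def[symmetric] Req using PP_shrink_some[OF R'sub] by simp
    then have "t_ind (shrink_m V m T) R = t_ind m R'" unfolding t_ind_def cR by simp
    moreover have "R' \<in> odd_sets V" using R'sub Rodd R3 cR by (auto simp: odd_sets_def)
    ultimately show ?thesis by blast
  qed
qed

lemma Gamma_ge: assumes "finite V" "R \<in> odd_sets V" shows "t_ind m R \<le> Gamma V m"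
proof -
  have "odd_sets V \<subseteq> Pow V" by (auto simp: odd_sets_def)
  then have "finite (odd_sets V)" using assms(1) finite_subset by blast
  then show ?thesis using assms(2) unfolding Gamma_def Gamma_set_def by (intro Max_ge) auto
qed


theorem lemmaG:
  fixes V :: "'a set" and m :: "'a \<Rightarrow> 'a \<Rightarrow> nat" and \<Delta> :: nat and S :: "'a set"
  assumes mg: "multigraph V m"
    and reg: "regular V m \<Delta>"
    and even_order: "even (card V)"
    and S_sub: "S \<subset> V"
    and S_odd: "odd (card S)"
    and S_card: "card S \<ge> 3"
    and S_full: "t_ind m S \<ge> real \<Delta>"
    and S_max: "\<And>R. R \<in> odd_sets V \<Longrightarrow> t_ind m R \<ge> real \<Delta> \<Longrightarrow>
                  ex_ind m R \<Delta> \<le> ex_ind m S \<Delta>"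
  shows "max_deg (shrink_V V S) (shrink_m V m S) \<le> \<Delta>
       \<and> (\<forall>x\<in>Gamma_set (shrink_V V S) (shrink_m V m S). x \<le> Gamma V m)
       \<and> max_deg (shrink_V V (V - S)) (shrink_m V m (V - S)) \<le> \<Delta>
       \<and> (\<forall>x\<in>Gamma_set (shrink_V V (V - S)) (shrink_m V m (V - S)). x \<le> Gamma V m)"
proof -
  have fin: "finite V" and sym: "\<forall>u v. m u v = m v u" and zero: "\<forall>v. m v v = 0"
    using mg by (auto simp: multigraph_def)
  have SV: "S \<subseteq> V" using S_sub by auto
  have finS: "finite S" using SV fin finite_subset by blast
  have cS: "real (card S) - 1 > 0" using S_card by simp
  have PSS: "real (PP m S S) \<ge> real \<Delta> * (real (card S) - 1)"
    using S_full cS by (simp add: t_ind_real[OF mg finS] pos_le_divide_eq)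
  have SoddV: "S \<in> odd_sets V" using SV S_odd S_card by (simp add: odd_sets_def)
  have GS: "real \<Delta> \<le> Gamma V m" using Gamma_ge[OF fin SoddV, of m] S_full by linarith
  have exS: "ex_ind m S \<Delta> = real (PP m S S) / 2 - real \<Delta> * (real (card S) - 1) / 2"
    by (rule ex_ind_real[OF mg finS])
  have VS: "V = S \<union> (V - S)" using SV by auto
  have PSV: "PP m S V = PP m S S + PP m S (V - S)"
    using PP_un_right[of S "V - S" m S] finS fin VS by (metis Diff_disjoint finite_Diff)
  have "PP m S V = \<Delta> * card S" using PP_V[OF reg SV] .
  then have "real (PP m S S) + real (PP m S (V - S)) = real \<Delta> * real (card S)"
    using PSV by (metis of_nat_add of_nat_mult)
  then have "real (PP m S (V - S)) \<le> real \<Delta>" using PSS by (simp add: algebra_simps)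
  then have bd: "PP m S (V - S) \<le> \<Delta>" by simp
  have VVS: "V - (V - S) = S" using SV by auto
  have bd2: "PP m (V - S) (V - (V - S)) \<le> \<Delta>" using bd PP_sym[OF sym] VVS by metis
  have D1: "max_deg (shrink_V V S) (shrink_m V m S) \<le> \<Delta>"
    by (rule maxdeg_shrink[OF mg reg SV bd])
  have D2: "max_deg (shrink_V V (V - S)) (shrink_m V m (V - S)) \<le> \<Delta>"
    by (rule maxdeg_shrink[OF mg reg _ bd2]) auto
  have G1: "\<forall>x\<in>Gamma_set (shrink_V V S) (shrink_m V m S). x \<le> Gamma V m"
  proof
    fix x assume "x \<in> Gamma_set (shrink_V V S) (shrink_m V m S)"
    then obtain R where R: "R \<in> odd_sets (shrink_V V S)" and x: "x = t_ind (shrink_m V m S) R"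
      by (auto simp: Gamma_set_def)
    from gamma_cases[OF mg SV R] show "x \<le> Gamma V m"
    proof
      assume "\<exists>R'. R' \<in> odd_sets V \<and> t_ind (shrink_m V m S) R = t_ind m R'"
      then show ?thesis using Gamma_ge[OF fin] x by auto
    next
      assume "\<exists>R'. R' \<subseteq> V - S \<and> even (card R') \<and> card R' \<ge> 2 \<and>
            t_ind (shrink_m V m S) R = real (PP m R' R' + 2 * PP m R' S) / real (card R')"
      then obtain R' where R': "R' \<subseteq> V - S" "even (card R')" "card R' \<ge> 2"
        and xe: "x = real (PP m R' R' + 2 * PP m R' S) / real (card R')" using x by blast
      show ?thesis
      proof (rule ccontr)
        assume "\<not> x \<le> Gamma V m"
        then have "x > real \<Delta>" using GS by simp
        then have A: "real (PP m R' R') + 2 * real (PP m R' S) > real \<Delta> * real (card R')"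
          using xe R'(3) by (simp add: pos_less_divide_eq)
        have finR': "finite R'" using R'(1) fin finite_subset by blast
        have disj: "R' \<inter> S = {}" using R'(1) by auto
        define Q where "Q = R' \<union> S"
        have finQ: "finite Q" using finR' finS by (simp add: Q_def)
        have cQ: "card Q = card R' + card S" using card_Un_disjoint[OF finR' finS disj] by (simp add: Q_def)
        have PQ: "PP m Q Q = PP m R' R' + PP m R' S + PP m S R' + PP m S S"
          unfolding Q_def using finR' finS disj
          by (simp add: PP_un_left PP_un_right Int_commute)
        have PQ': "real (PP m Q Q) = real (PP m R' R') + 2 * real (PP m R' S) + real (PP m S S)"
          using PQ PP_sym[OF sym, of S R'] by simp
        have QV: "Q \<in> odd_sets V" using R' SV cQ S_odd S_card by (auto simp: odd_sets_def Q_def)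
        have cQ1: "real (card Q) - 1 > 0" using cQ S_card by simp
        have "real (PP m Q Q) \<ge> real \<Delta> * (real (card Q) - 1)"
          using PQ' A PSS cQ by (simp add: algebra_simps)
        then have tQ: "t_ind m Q \<ge> real \<Delta>"
          using cQ1 by (simp add: t_ind_real[OF mg finQ] pos_le_divide_eq)
        have dd: "real \<Delta> * (real (card Q) - 1) = real \<Delta> * real (card R') + real \<Delta> * (real (card S) - 1)"
          using cQ by (simp add: algebra_simps)
        have "ex_ind m Q \<Delta> = real (PP m Q Q) / 2 - real \<Delta> * (real (card Q) - 1) / 2"
          by (rule ex_ind_real[OF mg finQ])
        then have "ex_ind m Q \<Delta> > ex_ind m S \<Delta>"
          using PQ' A dd exS by linarith
        then show False using S_max[OF QV tQ] by simp
      qed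
    qed
  qed
  have G2: "\<forall>x\<in>Gamma_set (shrink_V V (V - S)) (shrink_m V m (V - S)). x \<le> Gamma V m"
  proof
    fix x assume "x \<in> Gamma_set (shrink_V V (V - S)) (shrink_m V m (V - S))"
    then obtain R where R: "R \<in> odd_sets (shrink_V V (V - S))" and x: "x = t_ind (shrink_m V m (V - S)) R"
      by (auto simp: Gamma_set_def)
    have VSV: "V - S \<subseteq> V" by auto
    from gamma_cases[OF mg VSV R] show "x \<le> Gamma V m"
    proof
      assume "\<exists>R'. R' \<in> odd_sets V \<and> t_ind (shrink_m V m (V - S)) R = t_ind m R'"
      then show ?thesis using Gamma_ge[OF fin] x by auto
    next
      assume "\<exists>R'. R' \<subseteq> V - (V - S) \<and> even (card R') \<and> card R' \<ge> 2 \<and>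
            t_ind (shrink_m V m (V - S)) R = real (PP m R' R' + 2 * PP m R' (V - S)) / real (card R')"
      then obtain R' where R': "R' \<subseteq> S" "even (card R')" "card R' \<ge> 2"
        and xe: "x = real (PP m R' R' + 2 * PP m R' (V - S)) / real (card R')" using x VVS by auto
      show ?thesis
      proof (rule ccontr)
        assume "\<not> x \<le> Gamma V m"
        then have "x > real \<Delta>" using GS by simp
        then have A: "real (PP m R' R') + 2 * real (PP m R' (V - S)) > real \<Delta> * real (card R')"
          using xe R'(3) by (simp add: pos_less_divide_eq)
        have finR': "finite R'" using R'(1) finS finite_subset by blast
        define U where "U = S - R'"
        have finU: "finite U" using finS by (simp add: U_def)
        have SU: "S = R' \<union> U" and dU: "R' \<inter> U = {}" using R'(1) by (auto simp: U_def)
        have cU: "card U = card S - card R'" unfolding U_def using R'(1) finR'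
          by (simp add: card_Diff_subset)
        have cle: "card R' \<le> card S" using R'(1) finS card_mono by blast
        have cUr: "real (card U) = real (card S) - real (card R')" using cU cle by simp
        have Uodd: "odd (card U)" using cU cle S_odd R'(2) by auto
        have P1: "PP m R' V = PP m R' S + PP m R' (V - S)"
          using PP_un_right[of S "V - S" m R'] finS fin VS by (metis Diff_disjoint finite_Diff)
        have P2: "PP m R' S = PP m R' R' + PP m R' U"
          using PP_un_right[OF finR' finU dU, of m] SU by simp
        have P3: "PP m S S = PP m R' R' + PP m R' U + PP m U R' + PP m U U"
          using SU finR' finU dU by (simp add: PP_un_left PP_un_right Int_commute)
        have P4: "PP m R' V = \<Delta> * card R'" using PP_V[OF reg] R'(1) SV by blast
        have P3': "real (PP m S S) = real (PP m R' R') + 2 * real (PP m R' U) + real (PP m U U)"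
          using P3 PP_sym[OF sym, of U R'] by simp
        have P14: "real (PP m R' R') + real (PP m R' U) + real (PP m R' (V - S)) = real \<Delta> * real (card R')"
          using P1 P2 P4 by (metis of_nat_add of_nat_mult)
        have key: "real (PP m U U) / 2 - real \<Delta> * (real (card U) - 1) / 2
                   > real (PP m S S) / 2 - real \<Delta> * (real (card S) - 1) / 2"
        proof -
          have "real \<Delta> * (real (card S) - 1) = real \<Delta> * real (card R') + real \<Delta> * (real (card U) - 1)"
            unfolding cUr by (simp add: algebra_simps)
          then show ?thesis using A P3' P14 by linarith
        qed
        have exS0: "real (PP m S S) / 2 - real \<Delta> * (real (card S) - 1) / 2 \<ge> 0" using PSS by simp
        show False
        proof (cases "card U \<ge> 3")
          case True
          have UV: "U \<in> odd_sets V" using True Uodd SV by (auto simp: odd_sets_def U_def)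
          have cU1: "real (card U) - 1 > 0" using True by simp
          have "real (PP m U U) \<ge> real \<Delta> * (real (card U) - 1)" using key exS0 by simp
          then have tU: "t_ind m U \<ge> real \<Delta>"
            using cU1 by (simp add: t_ind_real[OF mg finU] pos_le_divide_eq)
          show False using S_max[OF UV tU] key by (simp add: ex_ind_real[OF mg finU] exS)
        next
          case False
          then have "card U = 1" using Uodd by presburger
          then obtain a where Ua: "U = {a}" using card_1_singletonE by blast
          have "PP m U U = 0" using zero by (simp add: Ua PP_def)
          then show False using key exS0 \<open>card U = 1\<close> by simp
        qed
      qed
    qed
  qed
  show ?thesis using D1 G1 D2 G2 by blast
qed

end
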